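(* In the two-valued atomic model under the proportional-to-square-roots scheme, a $(k,l)$-partition is a Nash equilibrium if the following conditions hold: (1) $l-1\ge k$ (equivalently $\frac{\sqrt a}{\sqrt a+k}\ge\frac{\sqrt a}{\sqrt a+l-1}$); (2) $k\le l-\sqrt a$ (equivalently $\frac{1}{\sqrt a+k}\ge\frac1l$); (3) $k\ge l-\sqrt a-1$ (equivalently $\frac1l\ge\frac{1}{\sqrt a+k+1}$).
   Context: Atomic model with threshold $h$: every player has stake $1$ (small) or $a$ (large), with $h,a$ integers, $2\le a\le h-1$. Pools partition the players; a pool $C$ has reward $\rho(C)=1$ if its total stake is at least $h$, else $0$. Proportional-to-square-roots scheme: player $i$ with stake $a_i$ in pool $C$ receives $\frac{\sqrt{a_i}}{\sum_{j\in C}\sqrt{a_j}}\rho(C)$. A partition into winning pools is a Nash equilibrium if no player can strictly increase her payment by moving to another pool of the partition or opening a new pool alone. For integers $k,l$ with $k+a\ge h$ and $l\ge h+1$, a $(k,l)$-partition consists only of pools of the types: Type A: exactly one large player and $k$ small players; Type B: $l$ small players; Type C: $l-1$ small players. *)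

theory Defs
  imports Complex_Main "HOL-Library.Disjoint_Sets"
begin

definition pool_stake :: "('p \<Rightarrow> nat) \<Rightarrow> 'p set \<Rightarrow> nat" where
  "pool_stake s C = (\<Sum>j\<in>C. s j)"

definition reward :: "nat \<Rightarrow> ('p \<Rightarrow> nat) \<Rightarrow> 'p set \<Rightarrow> real" where
  "reward h s C = (if pool_stake s C \<ge> h then 1 else 0)"

definition pay :: "nat \<Rightarrow> ('p \<Rightarrow> nat) \<Rightarrow> 'p set \<Rightarrow> 'p \<Rightarrow> real" where
  "pay h s C i = sqrt (real (s i)) / (\<Sum>j\<in>C. sqrt (real (s j))) * reward h s C"

definition nash_eq :: "nat \<Rightarrow> ('p \<Rightarrow> nat) \<Rightarrow> 'p set \<Rightarrow> 'p set set \<Rightarrow> bool" where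
  "nash_eq h s N P \<longleftrightarrow>
     partition_on N P \<and>
     (\<forall>C\<in>P. reward h s C = 1) \<and>
     (\<forall>C\<in>P. \<forall>i\<in>C.
        (\<forall>C'\<in>P. C' \<noteq> C \<longrightarrow> pay h s (insert i C') i \<le> pay h s C i) \<and>
        pay h s {i} i \<le> pay h s C i)"

(* (k,l)-partition: every pool is of type A (one large player with stake a and k small players),
   type B (l small players) or type C (l-1 small players). *)
definition kl_partition :: "nat \<Rightarrow> ('p \<Rightarrow> nat) \<Rightarrow> nat \<Rightarrow> nat \<Rightarrow> 'p set set \<Rightarrow> bool" where
  "kl_partition a s k l P \<longleftrightarrow>
     (\<forall>C\<in>P.
        (\<exists>j\<in>C. s j = a \<and> (\<forall>m\<in>C - {j}. s m = 1) \<and> card (C - {j}) = k) \<or>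
        ((\<forall>m\<in>C. s m = 1) \<and> card C = l) \<or>
        ((\<forall>m\<in>C. s m = 1) \<and> card C = l - 1))"

end

theory Submission
  imports Defs
begin

lemma pool_facts:
  fixes h a k l :: nat and s :: "'p \<Rightarrow> nat" and C :: "'p set"
  assumes "2 \<le> a" "finite C"
    and "k + a \<ge> h" and "l \<ge> h + 1"
    and "l - 1 \<ge> k"
    and "real k \<le> real l - sqrt (real a)"
    and "real k \<ge> real l - sqrt (real a) - 1"
    and hty: "(\<exists>j\<in>C. s j = a \<and> (\<forall>m\<in>C - {j}. s m = 1) \<and> card (C - {j}) = k) \<or>
        ((\<forall>m\<in>C. s m = 1) \<and> card C = l) \<or>
        ((\<forall>m\<in>C. s m = 1) \<and> card C = l - 1)"
  shows "pool_stake s C \<ge> h \<and>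
     (\<Sum>j\<in>C. sqrt (real (s j))) \<ge> min (sqrt a + k) (real l - 1) \<and>
     (\<forall>i\<in>C. s i \<ge> 1 \<and> (\<Sum>j\<in>C. sqrt (real (s j))) - sqrt (real (s i)) \<le> min (sqrt a + k) (real l - 1))"
  using hty
proof (elim disjE)
  assume "\<exists>j\<in>C. s j = a \<and> (\<forall>m\<in>C - {j}. s m = 1) \<and> card (C - {j}) = k"
  then obtain j where j: "j \<in> C" "s j = a" "\<forall>m\<in>C - {j}. s m = 1" "card (C - {j}) = k" by blast
  have Ceq: "C = insert j (C - {j})" using j by blast
  have fin: "finite (C - {j})" using assms by simp
  have s1: "(\<Sum>m\<in>C - {j}. sqrt (real (s m))) = real k"
    using j by simp
  have s2: "(\<Sum>m\<in>C - {j}. s m) = k" using j by simp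
  have sumC: "(\<Sum>m\<in>C. sqrt (real (s m))) = sqrt a + k"
    by (subst Ceq, subst sum.insert[OF fin], simp_all add: s1 j)
  have stC: "pool_stake s C = a + k"
    unfolding pool_stake_def by (subst Ceq, subst sum.insert[OF fin], simp_all add: s2 j)
  have sa: "sqrt (real a) \<ge> 1" using assms by simp
  have lk: "real k \<le> real l - 1" using assms by linarith
  show ?thesis
  proof (intro conjI ballI)
    show "pool_stake s C \<ge> h" using stC assms by simp
    show "(\<Sum>j\<in>C. sqrt (real (s j))) \<ge> min (sqrt a + k) (real l - 1)" using sumC by simp
  next
    fix i assume i: "i \<in> C"
    show "s i \<ge> 1" using i j assms by (cases "i = j") auto
    show "(\<Sum>j\<in>C. sqrt (real (s j))) - sqrt (real (s i)) \<le> min (sqrt a + k) (real l - 1)"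
    proof (cases "i = j")
      case True then show ?thesis using sumC j lk sa by simp
    next
      case False then have "s i = 1" using i j by blast
      then show ?thesis using sumC assms by simp
    qed
  qed
next
  assume A: "(\<forall>m\<in>C. s m = 1) \<and> card C = l"
  have sumC: "(\<Sum>m\<in>C. sqrt (real (s m))) = real l" using A by simp
  have stC: "pool_stake s C = l" using A unfolding pool_stake_def by simp
  show ?thesis using sumC stC A assms by auto
next
  assume A: "(\<forall>m\<in>C. s m = 1) \<and> card C = l - 1"
  have sumC: "(\<Sum>m\<in>C. sqrt (real (s m))) = real l - 1" using A assms by simp
  have stC: "pool_stake s C = l - 1" using A unfolding pool_stake_def by simp
  show ?thesis using sumC stC A assms by auto
qed

theorem lemmaD1:
  fixes h a k l :: nat and s :: "'p \<Rightarrow> nat" and N :: "'p set" and P :: "'p set set"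
  assumes "2 \<le> a" and "a \<le> h - 1"
    and "finite N"
    and "\<forall>i\<in>N. s i = 1 \<or> s i = a"
    and "k + a \<ge> h" and "l \<ge> h + 1"
    and "partition_on N P"
    and "kl_partition a s k l P"
    and "l - 1 \<ge> k"
    and "real k \<le> real l - sqrt (real a)"
    and "real k \<ge> real l - sqrt (real a) - 1"
  shows "nash_eq h s N P"
proof -
  define m where "m = min (sqrt a + k) (real l - 1)"
  define \<sigma> where "\<sigma> C = (\<Sum>j\<in>C. sqrt (real (s j)))" for C :: "'p set"
  have F: "finite C \<and> pool_stake s C \<ge> h \<and> \<sigma> C \<ge> m \<and>
     (\<forall>i\<in>C. s i \<ge> 1 \<and> \<sigma> C - sqrt (real (s i)) \<le> m)" if C: "C \<in> P" for C
  proof -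
    have "C \<subseteq> N" using assms(7) C unfolding partition_on_def by blast
    then have fin: "finite C" using assms(3) finite_subset by blast
    show ?thesis using pool_facts[OF assms(1) fin assms(5,6,9,10,11)] assms(8) C fin
      unfolding kl_partition_def m_def \<sigma>_def by blast
  qed
  have mpos: "m > 0" using assms unfolding m_def by simp
  have h1: "h > 1" using assms by simp
  show ?thesis unfolding nash_eq_def
  proof (intro conjI ballI allI impI)
    show "partition_on N P" by fact
  next
    fix C assume "C \<in> P" then show "reward h s C = 1" using F unfolding reward_def by simp
  next
    fix C i C' assume C: "C \<in> P" and i: "i \<in> C" and C': "C' \<in> P" "C' \<noteq> C"
    have ni: "i \<notin> C'" using assms(7) C C' i unfolding partition_on_def
      by (meson disjoint_iff disjnt_def pairwiseD)
    have FC: "finite C'" using F C' by blast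
    have sig: "(\<Sum>j\<in>insert i C'. sqrt (real (s j))) = sqrt (s i) + \<sigma> C'"
      using sum.insert[OF FC ni] unfolding \<sigma>_def by simp
    have si: "s i \<ge> 1" "\<sigma> C - sqrt (s i) \<le> m" "\<sigma> C' \<ge> m" "\<sigma> C \<ge> m" using F C C' i by auto
    have sq: "sqrt (s i) > 0" using si by simp
    have sC: "\<sigma> C > 0" using si mpos sq by linarith
    have r: "reward h s (insert i C') \<le> 1" "reward h s (insert i C') \<ge> 0" unfolding reward_def by auto
    have payC: "pay h s C i = sqrt (s i) / \<sigma> C"
      using F C unfolding pay_def reward_def \<sigma>_def by simp
    have "pay h s (insert i C') i \<le> sqrt (s i) / (sqrt (s i) + \<sigma> C')"
      unfolding pay_def sig apply (rule mult_left_le)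
      using r sq sC si mpos by auto
    also have "\<dots> \<le> sqrt (s i) / \<sigma> C"
      using sq sC si by (intro divide_left_mono) auto
    finally show "pay h s (insert i C') i \<le> pay h s C i" using payC by simp
  next
    fix C i assume C: "C \<in> P" and i: "i \<in> C"
    have "i \<in> N" using assms(7) C i unfolding partition_on_def by blast
    then have "s i < h" using assms(4) h1 assms(2) by auto
    then have "pay h s {i} i = 0" unfolding pay_def reward_def pool_stake_def by simp
    moreover have "pay h s C i \<ge> 0" unfolding pay_def reward_def by (simp add: sum_nonneg)
    ultimately show "pay h s {i} i \<le> pay h s C i" by simp
  qed
qed

end
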